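(* Let $n\geq1$ be an integer, let $\alpha\geq5$, and let $f:\mathbb{R}^n\to[0,\infty)$ be an isotropic, log-concave function. Assume that $$ \sup_{\theta\in S^{n-1}}M_f(\theta,t)\leq e^{-5\alpha n}+\inf_{\theta\in S^{n-1}}M_f(\theta,t)\quad\text{for all }t\in\mathbb{R}. $$ Denote $g=f*\gamma_{n,1}$. Then $$ \sup_{\theta\in S^{n-1}}g(t\theta)\leq e^{-\alpha n}+\inf_{\theta\in S^{n-1}}g(t\theta)\quad\text{for all }t\geq0. $$
   Context: Log-concave: $f(\lambda x+(1-\lambda)y)\geq f(x)^\lambda f(y)^{1-\lambda}$; isotropic: $\int f=1$, $\int xf=0$, $\int\langle x,\theta\rangle^2f(x)dx=|\theta|^2$ for all $\theta$. $M_f(\theta,t)=\int_{\{x:\langle x,\theta\rangle\leq t\}}f(x)dx$ for $\theta\in S^{n-1}$, $t\in\mathbb{R}$. For $v>0$, $\gamma_{n,v}(x)=(2\pi v)^{-n/2}\exp(-|x|^2/(2v))$. $*$ denotes convolution. *)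

theory Defs
  imports "HOL-Analysis.Analysis"
begin

definition log_concave :: "('a::euclidean_space \<Rightarrow> real) \<Rightarrow> bool" where
  "log_concave f \<longleftrightarrow> (\<forall>x y. \<forall>l::real. 0 \<le> l \<and> l \<le> 1 \<longrightarrow>
      f (l *\<^sub>R x + (1 - l) *\<^sub>R y) \<ge> f x powr l * f y powr (1 - l))"

definition isotropic :: "('a::euclidean_space \<Rightarrow> real) \<Rightarrow> bool" where
  "isotropic f \<longleftrightarrow> integrable lebesgue f
     \<and> (\<integral>x. f x \<partial>lebesgue) = 1
     \<and> integrable lebesgue (\<lambda>x. f x *\<^sub>R x)
     \<and> (\<integral>x. f x *\<^sub>R x \<partial>lebesgue) = 0
     \<and> (\<forall>\<theta>. integrable lebesgue (\<lambda>x. (x \<bullet> \<theta>)\<^sup>2 * f x)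
          \<and> (\<integral>x. (x \<bullet> \<theta>)\<^sup>2 * f x \<partial>lebesgue) = (norm \<theta>)\<^sup>2)"

definition Mf :: "('a::euclidean_space \<Rightarrow> real) \<Rightarrow> 'a \<Rightarrow> real \<Rightarrow> real" where
  "Mf f \<theta> t = (\<integral>x\<in>{x. x \<bullet> \<theta> \<le> t}. f x \<partial>lebesgue)"

definition gauss :: "real \<Rightarrow> 'a::euclidean_space \<Rightarrow> real" where
  "gauss v x = (2 * pi * v) powr (- real DIM('a) / 2) * exp (- (norm x)\<^sup>2 / (2 * v))"

definition conv :: "('a::euclidean_space \<Rightarrow> real) \<Rightarrow> ('a \<Rightarrow> real) \<Rightarrow> 'a \<Rightarrow> real" where
  "conv f h x = (\<integral>y. f y * h (x - y) \<partial>lebesgue)"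

end

theory Submission
  imports Defs "HOL-Probability.Probability"
begin
lemma inner_sum_Basis_comp:
  "c \<in> Basis \<Longrightarrow> (\<Sum>b\<in>Basis. f b *\<^sub>R b) \<bullet> (c::'a::euclidean_space) = f c"
proof -
  assume c: "c \<in> Basis"
  have "(\<Sum>b\<in>Basis. f b *\<^sub>R b) \<bullet> c = (\<Sum>b\<in>Basis. if b = c then f b else 0)"
    unfolding inner_sum_left by (rule sum.cong) (auto simp: inner_Basis c)
  also have "\<dots> = f c" using c by (simp add: sum.delta')
  finally show ?thesis .
qed

lemma integral_lborel_prod:
  fixes h :: "'a::euclidean_space \<Rightarrow> real \<Rightarrow> 'b::{real_normed_field,banach,second_countable_topology}"
  assumes [measurable]: "\<And>b. b \<in> Basis \<Longrightarrow> h b \<in> borel_measurable borel"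
  assumes int: "\<And>b. b \<in> Basis \<Longrightarrow> integrable lborel (h b)"
  shows "integrable lborel (\<lambda>z::'a. \<Prod>b\<in>Basis. h b (z \<bullet> b))"
    and "(\<integral>z. (\<Prod>b\<in>Basis. h b (z \<bullet> b)) \<partial>(lborel::'a measure)) = (\<Prod>b\<in>Basis. integral\<^sup>L lborel (h b))"
proof -
  interpret finite_product_sigma_finite "\<lambda>_. lborel" "Basis::'a set"
    proof qed simp
  have eq: "(\<lambda>z::'a. \<Prod>b\<in>Basis. h b (z \<bullet> b)) \<circ> (\<lambda>f. \<Sum>b\<in>Basis. f b *\<^sub>R b) 
      = (\<lambda>f. \<Prod>b\<in>Basis. h b (f b))"
    by (auto simp: fun_eq_iff inner_sum_Basis_comp cong: prod.cong)
  have m: "(\<lambda>f. \<Sum>b\<in>Basis. f b *\<^sub>R b) \<in> (\<Pi>\<^sub>M b\<in>Basis. lborel) \<rightarrow>\<^sub>M (borel :: 'a measure)"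
    by measurable
  have mz: "(\<lambda>z::'a. \<Prod>b\<in>Basis. h b (z \<bullet> b)) \<in> borel_measurable borel"
    by measurable
  have "integrable (\<Pi>\<^sub>M b\<in>Basis. lborel) (\<lambda>f. \<Prod>b\<in>Basis. h b (f b))"
    by (rule product_integrable_prod) (auto intro: int)
  then show "integrable lborel (\<lambda>z::'a. \<Prod>b\<in>Basis. h b (z \<bullet> b))"
    apply (subst lborel_eq)
    apply (subst integrable_distr_eq[OF m mz])
    using eq by (simp add: comp_def)
  have "(\<integral>z. (\<Prod>b\<in>Basis. h b (z \<bullet> b)) \<partial>(lborel::'a measure)) =
     (\<integral>f. (\<Prod>b\<in>Basis. h b (f b)) \<partial>(\<Pi>\<^sub>M b\<in>Basis. lborel))"
    apply (subst lborel_eq)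
    apply (subst integral_distr[OF m mz])
    using eq by (simp add: comp_def)
  also have "\<dots> = (\<Prod>b\<in>Basis. integral\<^sup>L lborel (h b))"
    by (rule product_integral_prod) (auto intro: int)
  finally show "(\<integral>z. (\<Prod>b\<in>Basis. h b (z \<bullet> b)) \<partial>(lborel::'a measure)) = (\<Prod>b\<in>Basis. integral\<^sup>L lborel (h b))" .
qed

lemma gauss_prod: "gauss 1 (z::'a::euclidean_space) = (\<Prod>b\<in>Basis. std_normal_density (z\<bullet>b))"
proof -
  have n2: "(norm z)^2 = (\<Sum>b\<in>Basis. (z\<bullet>b)^2)"
    unfolding power2_norm_eq_inner by (subst euclidean_inner) (simp add: power2_eq_square)
  have e: "exp (- (norm z)\<^sup>2 / (2 * 1)) = (\<Prod>b\<in>Basis. exp (- ((z\<bullet>b)\<^sup>2) / 2))"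
    unfolding n2 by (simp add: exp_sum[symmetric] sum_divide_distrib sum_negf)
  have c: "(2 * pi * 1) powr (- real DIM('a) / 2) = (\<Prod>b\<in>(Basis::'a set). 1 / sqrt (2 * pi))"
  proof -
    have p: "0 < 2 * pi" by simp
    have "(2 * pi * 1) powr (- real DIM('a) / 2) = inverse ((2*pi) powr (1/2 * real DIM('a)))"
      by (simp add: powr_minus[symmetric])
    also have "(2*pi) powr (1/2 * real DIM('a)) = ((2*pi) powr (1/2)) powr (real DIM('a))"
      by (simp add: powr_powr)
    also have "\<dots> = sqrt (2*pi) ^ DIM('a)"
      using p by (simp add: powr_half_sqrt powr_realpow)
    finally show ?thesis by (simp add: prod_constant power_one_over inverse_eq_divide)
  qed
  show ?thesis unfolding gauss_def c e std_normal_density_def prod.distrib by simp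
qed

lemma std_normal_integrable: "integrable lborel std_normal_density"
  using std_normal_moment_even[of 0] by (simp add: has_bochner_integral_iff)

lemma std_normal_integral: "integral\<^sup>L lborel std_normal_density = 1"
  using std_normal_moment_even[of 0] by (simp add: has_bochner_integral_iff)

lemma gauss_integrable: "integrable lborel (gauss 1 :: 'a::euclidean_space \<Rightarrow> real)"
  using integral_lborel_prod(1)[of "\<lambda>_::'a. std_normal_density"]
  by (simp add: gauss_prod[abs_def] std_normal_integrable)

lemma gauss_integral: "integral\<^sup>L lborel (gauss 1 :: 'a::euclidean_space \<Rightarrow> real) = 1"
  using integral_lborel_prod(2)[of "\<lambda>_::'a. std_normal_density"]
  by (simp add: gauss_prod[abs_def] std_normal_integrable std_normal_integral)

lemma gauss_nonneg: "0 \<le> gauss v x" unfolding gauss_def by simp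

lemma gauss_norm: "norm (x::'a::euclidean_space) = norm (y::'a) \<Longrightarrow> gauss v x = gauss v y" unfolding gauss_def by simp

lemma char_std_normal_lborel:
  "(\<integral>u. complex_of_real (std_normal_density u) * iexp (u * t) \<partial>lborel) = complex_of_real (exp (- (t^2) / 2))"
proof -
  have "char std_normal_distribution t = (\<integral>u. complex_of_real (std_normal_density u) * iexp (u * t) \<partial>lborel)"
    unfolding char_def
    by (subst integral_density) (auto simp: scaleR_conv_of_real mult.commute)
  then show ?thesis using char_std_normal_distribution by simp
qed

lemma std_normal_iexp_integrable:
  "integrable lborel (\<lambda>u. complex_of_real (std_normal_density u) * iexp (u * t))"
proof (rule Bochner_Integration.integrable_bound[OF std_normal_integrable])
  show "(\<lambda>u. complex_of_real (std_normal_density u) * iexp (u * t)) \<in> borel_measurable lborel"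
    by measurable
  show "AE x in lborel. norm (complex_of_real (std_normal_density x) * iexp (x * t)) \<le> norm (std_normal_density x)"
    by (simp add: norm_mult)
qed

lemma gauss_cos:
  fixes w :: "'a::euclidean_space"
  shows "integrable lborel (\<lambda>z::'a. cos (z \<bullet> w) * gauss 1 z)"
    and "(\<integral>z. cos (z \<bullet> w) * gauss 1 z \<partial>lborel) = exp (- (norm w)\<^sup>2 / 2)"
proof -
  define h where "h = (\<lambda>(b::'a) u. complex_of_real (std_normal_density u) * iexp (u * (w \<bullet> b)))"
  have hm[measurable]: "h b \<in> borel_measurable borel" for b unfolding h_def by measurable
  have hi: "integrable lborel (h b)" for b unfolding h_def by (rule std_normal_iexp_integrable)
  have prodeq: "(\<Prod>b\<in>Basis. h b (z \<bullet> b)) = complex_of_real (gauss 1 z) * iexp (z \<bullet> w)" for z :: 'a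
  proof -
    have "z \<bullet> w = (\<Sum>b\<in>Basis. (z \<bullet> b) * (w \<bullet> b))" by (subst euclidean_inner) simp
    then have "iexp (z \<bullet> w) = (\<Prod>b\<in>Basis. iexp ((z \<bullet> b) * (w \<bullet> b)))"
      by (simp add: exp_sum[symmetric] sum_distrib_left)
    then show ?thesis unfolding h_def gauss_prod prod.distrib by simp
  qed
  have I1: "integrable lborel (\<lambda>z::'a. \<Prod>b\<in>Basis. h b (z \<bullet> b))"
    by (rule integral_lborel_prod(1)) (auto intro: hi)
  have I2: "(\<integral>z. (\<Prod>b\<in>Basis. h b (z \<bullet> b)) \<partial>(lborel::'a measure)) = (\<Prod>b\<in>Basis. integral\<^sup>L lborel (h b))"
    by (rule integral_lborel_prod(2)) (auto intro: hi)
  have reeq: "cos (z \<bullet> w) * gauss 1 z = Re (\<Prod>b\<in>Basis. h b (z \<bullet> b))" for z :: 'a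
    unfolding prodeq by (simp add: Re_exp)
  show "integrable lborel (\<lambda>z::'a. cos (z \<bullet> w) * gauss 1 z)"
    unfolding reeq using I1 by (rule integrable_Re)
  have "(\<integral>z. cos (z \<bullet> w) * gauss 1 z \<partial>lborel) = Re (\<Prod>b\<in>Basis. integral\<^sup>L lborel (h b))"
    unfolding reeq integral_Re[OF I1] I2 ..
  also have "\<dots> = (\<Prod>b\<in>(Basis::'a set). exp (- ((w \<bullet> b)\<^sup>2) / 2))"
    unfolding h_def char_std_normal_lborel by (simp flip: of_real_prod)
  also have "\<dots> = exp (- (norm w)\<^sup>2 / 2)"
  proof -
    have n2: "(norm w)^2 = (\<Sum>b\<in>Basis. (w\<bullet>b)^2)"
      unfolding power2_norm_eq_inner by (subst euclidean_inner) (simp add: power2_eq_square)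
    show ?thesis unfolding n2 by (simp add: exp_sum[symmetric] sum_divide_distrib sum_negf)
  qed
  finally show "(\<integral>z. cos (z \<bullet> w) * gauss 1 z \<partial>lborel) = exp (- (norm w)\<^sup>2 / 2)" .
qed

lemma std_normal_abs_integrable: "integrable lborel (\<lambda>u. \<bar>u\<bar> * std_normal_density u)"
  and std_normal_abs_integral: "(\<integral>u. \<bar>u\<bar> * std_normal_density u \<partial>lborel) \<le> 1"
proof -
  have h: "has_bochner_integral lborel (\<lambda>u. \<bar>u\<bar> * std_normal_density u) (sqrt (2/pi))"
    using std_normal_moment_abs_odd[of 0] by (simp add: mult.commute)
  then show "integrable lborel (\<lambda>u. \<bar>u\<bar> * std_normal_density u)" by (simp add: has_bochner_integral_iff)
  have "sqrt (2/pi) \<le> 1"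
    using pi_gt3 by (simp add: real_sqrt_le_1_iff)
  then show "(\<integral>u. \<bar>u\<bar> * std_normal_density u \<partial>lborel) \<le> 1"
    using h by (simp add: has_bochner_integral_iff)
qed

lemma gauss_coord_abs:
  fixes c :: "'a::euclidean_space"
  assumes c: "c \<in> Basis"
  shows "integrable lborel (\<lambda>z::'a. \<bar>z \<bullet> c\<bar> * gauss 1 z)"
    and "(\<integral>z. \<bar>z \<bullet> c\<bar> * gauss 1 z \<partial>lborel) \<le> 1"
proof -
  define h where "h = (\<lambda>(b::'a) u. if b = c then \<bar>u\<bar> * std_normal_density u else std_normal_density u)"
  have hm[measurable]: "h b \<in> borel_measurable borel" for b unfolding h_def by measurable
  have hi: "integrable lborel (h b)" for b
    unfolding h_def by (cases "b = c") (auto simp: std_normal_abs_integrable std_normal_integrable)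
  have eq: "\<bar>z \<bullet> c\<bar> * gauss 1 z = (\<Prod>b\<in>Basis. h b (z \<bullet> b))" for z :: 'a
  proof -
    have "(\<Prod>b\<in>Basis. h b (z \<bullet> b)) = (\<Prod>b\<in>Basis. (if b = c then \<bar>z \<bullet> c\<bar> else 1) * std_normal_density (z \<bullet> b))"
      unfolding h_def by (rule prod.cong) auto
    also have "\<dots> = \<bar>z \<bullet> c\<bar> * gauss 1 z"
      unfolding prod.distrib gauss_prod using c by (simp add: prod.If_cases Int_absorb1)
    finally show ?thesis by simp
  qed
  show "integrable lborel (\<lambda>z::'a. \<bar>z \<bullet> c\<bar> * gauss 1 z)"
    unfolding eq by (rule integral_lborel_prod(1)) (auto intro: hi)
  have "(\<integral>z. \<bar>z \<bullet> c\<bar> * gauss 1 z \<partial>lborel) = (\<Prod>b\<in>(Basis::'a set). integral\<^sup>L lborel (h b))"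
    unfolding eq by (rule integral_lborel_prod(2)) (auto intro: hi)
  also have "\<dots> = (\<Prod>b\<in>(Basis::'a set). if b = c then (\<integral>u. \<bar>u\<bar> * std_normal_density u \<partial>lborel) else 1)"
    unfolding h_def by (rule prod.cong) (auto simp: std_normal_integral)
  also have "\<dots> = (\<integral>u. \<bar>u\<bar> * std_normal_density u \<partial>lborel)"
    using c by (simp add: prod.If_cases Int_absorb1)
  also have "\<dots> \<le> 1" by (rule std_normal_abs_integral)
  finally show "(\<integral>z. \<bar>z \<bullet> c\<bar> * gauss 1 z \<partial>lborel) \<le> 1" .
qed

lemma gauss_norm_moment:
  shows "integrable lborel (\<lambda>z::'a::euclidean_space. norm z * gauss 1 z)"
    and "(\<integral>z. norm z * gauss 1 z \<partial>(lborel::'a measure)) \<le> real DIM('a)"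
proof -
  have si: "integrable lborel (\<lambda>z::'a. \<Sum>c\<in>Basis. \<bar>z \<bullet> c\<bar> * gauss 1 z)"
    by (rule Bochner_Integration.integrable_sum) (erule gauss_coord_abs(1))
  have le: "norm z * gauss 1 z \<le> (\<Sum>c\<in>Basis. \<bar>z \<bullet> c\<bar> * gauss 1 z)" for z :: 'a
    using mult_right_mono[OF norm_le_l1[of z] gauss_nonneg[of 1 z]] by (simp add: sum_distrib_right)
  show I: "integrable lborel (\<lambda>z::'a. norm z * gauss 1 z)"
  proof (rule Bochner_Integration.integrable_bound[OF si])
    show "(\<lambda>z::'a. norm z * gauss 1 z) \<in> borel_measurable lborel"
      unfolding gauss_def by measurable
    show "AE x in lborel. norm (norm x * gauss 1 x) \<le> norm (\<Sum>c\<in>Basis. \<bar>x \<bullet> c\<bar> * gauss 1 (x::'a))"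
      using le by (auto simp: gauss_nonneg intro!: AE_I2 order_trans[OF _ abs_ge_self])
  qed
  have "(\<integral>z. norm z * gauss 1 z \<partial>(lborel::'a measure)) \<le> (\<integral>z. (\<Sum>c\<in>Basis. \<bar>z \<bullet> c\<bar> * gauss 1 z) \<partial>(lborel::'a measure))"
    by (rule integral_mono[OF I si le])
  also have "\<dots> = (\<Sum>c\<in>(Basis::'a set). \<integral>z. \<bar>z \<bullet> c\<bar> * gauss 1 z \<partial>lborel)"
    by (rule Bochner_Integration.integral_sum) (erule gauss_coord_abs(1))
  also have "\<dots> \<le> (\<Sum>c\<in>(Basis::'a set). 1)"
    by (rule sum_mono) (erule gauss_coord_abs(2))
  finally show "(\<integral>z. norm z * gauss 1 z \<partial>(lborel::'a measure)) \<le> real DIM('a)" by simp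
qed

lemma lebesgue_ident_meas: "(\<lambda>x. x) \<in> borel_measurable (lebesgue :: 'a::euclidean_space measure)"
  using id_borel_measurable_lebesgue by (simp add: id_def)

lemma borel_to_lebesgue: "g \<in> borel_measurable (borel::'a::euclidean_space measure) \<Longrightarrow> g \<in> borel_measurable lebesgue"
  using measurable_compose[OF lebesgue_ident_meas] by metis

locale fdens =
  fixes f fb :: "'a::euclidean_space \<Rightarrow> real"
  assumes fb_meas[measurable]: "fb \<in> borel_measurable borel"
    and fb_nonneg: "\<And>x. 0 \<le> fb x"
    and f_ae: "AE x in lebesgue. f x = fb x"
    and f_int: "integrable lebesgue f"
    and f_one: "(\<integral>x. f x \<partial>lebesgue) = 1"
    and f_mom: "\<And>\<theta>. integrable lebesgue (\<lambda>x. (x \<bullet> \<theta>)\<^sup>2 * f x)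
          \<and> (\<integral>x. (x \<bullet> \<theta>)\<^sup>2 * f x \<partial>lebesgue) = (norm \<theta>)\<^sup>2"
begin

lemma f_meas: "f \<in> borel_measurable lebesgue"
  using f_int by auto

lemma transfer:
  assumes g[measurable]: "g \<in> borel_measurable borel"
  shows "integrable lebesgue (\<lambda>x. g x * f x) \<longleftrightarrow> integrable lborel (\<lambda>x. g x * fb x)"
    and "(\<integral>x. g x * f x \<partial>lebesgue) = (\<integral>x. g x * fb x \<partial>lborel)"
proof -
  have ae: "AE x in lebesgue. g x * f x = g x * fb x" using f_ae by eventually_elim simp
  have m: "(\<lambda>x. g x * fb x) \<in> borel_measurable lborel" unfolding measurable_lborel2 by measurable
  have "integrable lebesgue (\<lambda>x. g x * f x) \<longleftrightarrow> integrable lebesgue (\<lambda>x. g x * fb x)"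
    by (rule integrable_cong_AE) (use ae borel_to_lebesgue[OF g] f_meas borel_to_lebesgue[OF fb_meas] in auto)
  also have "\<dots> \<longleftrightarrow> integrable lborel (\<lambda>x. g x * fb x)"
    using integrable_completion[OF m] by simp
  finally show "integrable lebesgue (\<lambda>x. g x * f x) \<longleftrightarrow> integrable lborel (\<lambda>x. g x * fb x)" .
  have "(\<integral>x. g x * f x \<partial>lebesgue) = (\<integral>x. g x * fb x \<partial>lebesgue)"
    by (rule integral_cong_AE) (use ae borel_to_lebesgue[OF g] f_meas borel_to_lebesgue[OF fb_meas] in auto)
  also have "\<dots> = (\<integral>x. g x * fb x \<partial>lborel)"
    using integral_completion[OF m] by simp
  finally show "(\<integral>x. g x * f x \<partial>lebesgue) = (\<integral>x. g x * fb x \<partial>lborel)" .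
qed

lemma fb_int: "integrable lborel fb"
  using transfer(1)[of "\<lambda>_. 1"] f_int by simp

lemma fb_one: "(\<integral>x. fb x \<partial>lborel) = 1"
  using transfer(2)[of "\<lambda>_. 1"] f_one by simp

lemma fb_mom_int: "integrable lborel (\<lambda>x. (x \<bullet> \<theta>)\<^sup>2 * fb x)"
  using transfer(1)[of "\<lambda>x. (x \<bullet> \<theta>)\<^sup>2"] f_mom[of \<theta>] by simp

lemma fb_mom: "(\<integral>x. (x \<bullet> \<theta>)\<^sup>2 * fb x \<partial>lborel) = (norm \<theta>)\<^sup>2"
  using transfer(2)[of "\<lambda>x. (x \<bullet> \<theta>)\<^sup>2"] f_mom[of \<theta>] by simp

lemma Mf_eq: "Mf f \<theta> t = (\<integral>x. indicator {x. x \<bullet> \<theta> \<le> t} x * fb x \<partial>lborel)"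
  unfolding Mf_def set_lebesgue_integral_def
  using transfer(2)[of "indicator {x. x \<bullet> \<theta> \<le> t}"] by simp

lemma ind_fb_int: "S \<in> sets borel \<Longrightarrow> integrable lborel (\<lambda>x. indicator S x * fb x)"
  using integrable_real_mult_indicator[of S lborel fb] fb_int by (simp add: mult.commute)

lemma Mf_nonneg: "0 \<le> Mf f \<theta> t"
  unfolding Mf_eq by (rule integral_nonneg_AE) (simp add: fb_nonneg)

lemma Mf_compl: "1 - Mf f \<theta> t = (\<integral>x. indicator {x. t < x \<bullet> \<theta>} x * fb x \<partial>lborel)"
proof -
  have "(\<integral>x. fb x \<partial>lborel) = (\<integral>x. indicator {x. x \<bullet> \<theta> \<le> t} x * fb x + indicator {x. t < x \<bullet> \<theta>} x * fb x \<partial>lborel)"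
    by (rule Bochner_Integration.integral_cong) (auto simp: indicator_def)
  also have "\<dots> = Mf f \<theta> t + (\<integral>x. indicator {x. t < x \<bullet> \<theta>} x * fb x \<partial>lborel)"
    unfolding Mf_eq by (rule Bochner_Integration.integral_add) (auto intro!: ind_fb_int)
  finally show ?thesis using fb_one by simp
qed

lemma Mf_le1: "Mf f \<theta> t \<le> 1"
proof -
  have "0 \<le> (\<integral>x. indicator {x. t < x \<bullet> \<theta>} x * fb x \<partial>lborel)"
    by (rule integral_nonneg_AE) (simp add: fb_nonneg)
  then show ?thesis using Mf_compl[of \<theta> t] by simp
qed

lemma cheb:
  assumes "norm \<omega> = 1" and "r \<noteq> 0" and S: "S \<in> sets borel"
    and sub: "\<And>x. x \<in> S \<Longrightarrow> r\<^sup>2 \<le> (x \<bullet> \<omega>)\<^sup>2"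
  shows "(\<integral>x. indicator S x * fb x \<partial>lborel) \<le> 1 / r\<^sup>2"
proof -
  have "(\<integral>x. indicator S x * fb x \<partial>lborel) \<le> (\<integral>x. ((x \<bullet> \<omega>)\<^sup>2 / r\<^sup>2) * fb x \<partial>lborel)"
  proof (rule integral_mono)
    show "integrable lborel (\<lambda>x. indicator S x * fb x)" using S by (rule ind_fb_int)
    show "integrable lborel (\<lambda>x. ((x \<bullet> \<omega>)\<^sup>2 / r\<^sup>2) * fb x)"
      using fb_mom_int[of \<omega>] integrable_divide[of lborel "\<lambda>x. (x \<bullet> \<omega>)\<^sup>2 * fb x" "r\<^sup>2"]
      by (simp add: field_simps)
    fix x
    have "indicator S x \<le> (x \<bullet> \<omega>)\<^sup>2 / r\<^sup>2"
      using sub[of x] assms(2) by (auto simp: indicator_def field_simps)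
    then show "indicator S x * fb x \<le> ((x \<bullet> \<omega>)\<^sup>2 / r\<^sup>2) * fb x"
      using fb_nonneg[of x] by (rule mult_right_mono)
  qed
  also have "\<dots> = (\<integral>x. (x \<bullet> \<omega>)\<^sup>2 * fb x \<partial>lborel) / r\<^sup>2"
    by (simp add: field_simps)
  also have "\<dots> = 1 / r\<^sup>2" using fb_mom[of \<omega>] assms(1) by simp
  finally show ?thesis .
qed

lemma Mf_cheb_neg:
  assumes "norm \<omega> = 1" "r < 0"
  shows "Mf f \<omega> r \<le> 1 / r\<^sup>2"
  unfolding Mf_eq
proof (rule cheb[OF assms(1)])
  fix x assume "x \<in> {x. x \<bullet> \<omega> \<le> r}"
  then have "\<bar>r\<bar> \<le> \<bar>x \<bullet> \<omega>\<bar>" using assms(2) by auto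
  then show "r\<^sup>2 \<le> (x \<bullet> \<omega>)\<^sup>2" by (metis abs_ge_zero power2_abs power_mono)
qed (use assms in auto)

lemma Mf_cheb_pos:
  assumes "norm \<omega> = 1" "0 < r"
  shows "1 - Mf f \<omega> r \<le> 1 / r\<^sup>2"
  unfolding Mf_compl
proof (rule cheb[OF assms(1)])
  fix x assume "x \<in> {x. r < x \<bullet> \<omega>}"
  then have "\<bar>r\<bar> \<le> \<bar>x \<bullet> \<omega>\<bar>" using assms(2) by auto
  then show "r\<^sup>2 \<le> (x \<bullet> \<omega>)\<^sup>2" by (metis abs_ge_zero power2_abs power_mono)
qed (use assms in auto)

end

definition hp :: "real \<Rightarrow> real \<Rightarrow> real \<Rightarrow> real" where
  "hp s a r = s * sin (a - s * r)"

definition kk :: "real \<Rightarrow> real \<Rightarrow> real" where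
  "kk r u = (if 0 < r \<and> r < u then 1 else 0) - (if u \<le> r \<and> r < 0 then 1 else 0)"

lemma hp_meas[measurable]: "(\<lambda>x. hp s a (g x)) \<in> borel_measurable M" if [measurable]: "g \<in> borel_measurable M"
  unfolding hp_def by measurable

lemma kk_meas[measurable]: "(\<lambda>x. kk (g x) (h x)) \<in> borel_measurable M"
  if [measurable]: "g \<in> borel_measurable M" "h \<in> borel_measurable M"
  unfolding kk_def by measurable

lemma hp_bound: "\<bar>hp s a r\<bar> \<le> \<bar>s\<bar>"
  unfolding hp_def abs_mult by (rule mult_left_le) auto

lemma kk_bound: "\<bar>kk r u\<bar> \<le> indicator {-\<bar>u\<bar>..\<bar>u\<bar>} r"
  unfolding kk_def by (auto simp: indicator_def)

lemma cos_deriv: "((\<lambda>r. cos (a - s * r)) has_vector_derivative hp s a x) (at x within S)"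
proof -
  have "((\<lambda>r. cos (a - s * r)) has_real_derivative (s * sin (a - s * x))) (at x within S)"
    by (auto intro!: derivative_eq_intros)
  then show ?thesis
    by (simp add: hp_def has_real_derivative_iff_has_vector_derivative[symmetric] mult.commute)
qed

lemma hp_cont: "continuous_on S (hp s a)"
  unfolding hp_def by (intro continuous_intros)

lemma ftc_kk:
  shows "integrable lborel (\<lambda>r. hp s a r * kk r u)"
    and "(\<integral>r. hp s a r * kk r u \<partial>lborel) = cos (a - s * u) - cos a"
proof -
  have ae: "AE r in lborel. r \<noteq> 0 \<and> r \<noteq> u" using AE_lborel_singleton[of 0] AE_lborel_singleton[of u]
    by eventually_elim auto
  show "integrable lborel (\<lambda>r. hp s a r * kk r u)"
  proof (rule Bochner_Integration.integrable_bound)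
    show "integrable lborel (\<lambda>r. \<bar>s\<bar> * indicator {-\<bar>u\<bar>..\<bar>u\<bar>} r)"
      by (intro integrable_mult_right) auto
    show "(\<lambda>r. hp s a r * kk r u) \<in> borel_measurable lborel" unfolding measurable_lborel2 by measurable
    show "AE r in lborel. norm (hp s a r * kk r u) \<le> norm (\<bar>s\<bar> * indicator {-\<bar>u\<bar>..\<bar>u\<bar>} r)"
      by (intro AE_I2) (auto simp: abs_mult intro!: mult_mono hp_bound kk_bound[unfolded abs_mult])
  qed
  show "(\<integral>r. hp s a r * kk r u \<partial>lborel) = cos (a - s * u) - cos a"
  proof (cases "0 \<le> u")
    case True
    have "(\<integral>r. hp s a r * kk r u \<partial>lborel) = (\<integral>r. indicator {0..u} r *\<^sub>R hp s a r \<partial>lborel)"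
    proof (rule integral_cong_AE)
      show "AE r in lborel. hp s a r * kk r u = indicator {0..u} r *\<^sub>R hp s a r"
        using ae by eventually_elim (use True in \<open>auto simp: kk_def indicator_def\<close>)
    qed (simp_all only: measurable_lborel2; measurable)+
    also have "\<dots> = cos (a - s * u) - cos (a - s * 0)"
      by (rule integral_FTC_atLeastAtMost[OF True cos_deriv hp_cont])
    finally show ?thesis by simp
  next
    case False
    have "(\<integral>r. hp s a r * kk r u \<partial>lborel) = (\<integral>r. - (indicator {u..0} r *\<^sub>R hp s a r) \<partial>lborel)"
    proof (rule integral_cong_AE)
      show "AE r in lborel. hp s a r * kk r u = - (indicator {u..0} r *\<^sub>R hp s a r)"
        using ae by eventually_elim (use False in \<open>auto simp: kk_def indicator_def\<close>)
    qed (simp_all only: measurable_lborel2; measurable)+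
    also have "\<dots> = - (cos (a - s * 0) - cos (a - s * u))"
      using integral_FTC_atLeastAtMost[of u 0 "\<lambda>r. cos (a - s * r)" "hp s a", OF _ cos_deriv hp_cont] False
      by simp
    finally show ?thesis by simp
  qed
qed

context fdens begin

definition KK :: "'a \<Rightarrow> real \<Rightarrow> real" where
  "KK \<omega> r = (if 0 < r then 1 - Mf f \<omega> r else if r < 0 then - Mf f \<omega> r else 0)"

lemma fb_lborel[measurable]: "fb \<in> borel_measurable lborel"
  by (simp add: measurable_lborel2)

lemma int_kk: "(\<integral>y. fb y * kk r (y \<bullet> \<omega>) \<partial>lborel) = KK \<omega> r"
proof -
  consider "0 < r" | "r < 0" | "r = 0" by linarith
  then show ?thesis
  proof cases
    case 1
    have "(\<integral>y. fb y * kk r (y \<bullet> \<omega>) \<partial>lborel) = (\<integral>x. indicator {x. r < x \<bullet> \<omega>} x * fb x \<partial>lborel)"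
      by (rule Bochner_Integration.integral_cong) (use 1 in \<open>auto simp: kk_def indicator_def\<close>)
    then show ?thesis using 1 Mf_compl[of \<omega> r] by (simp add: KK_def)
  next
    case 2
    have "(\<integral>y. fb y * kk r (y \<bullet> \<omega>) \<partial>lborel) = (\<integral>x. - (indicator {x. x \<bullet> \<omega> \<le> r} x * fb x) \<partial>lborel)"
      by (rule Bochner_Integration.integral_cong) (use 2 in \<open>auto simp: kk_def indicator_def\<close>)
    then show ?thesis using 2 by (simp add: KK_def Mf_eq)
  next
    case 3
    then show ?thesis by (simp add: KK_def kk_def)
  qed
qed

lemma layer:
  fixes \<omega> :: 'a
  shows "integrable lborel (\<lambda>r. hp s a r * KK \<omega> r)"
    and "(\<integral>y. cos (a - s * (y \<bullet> \<omega>)) * fb y \<partial>lborel) = cos a + (\<integral>r. hp s a r * KK \<omega> r \<partial>lborel)"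
proof -
  define F where "F = (\<lambda>y r. fb y * (hp s a r * kk r (y \<bullet> \<omega>)))"
  have Fm[measurable]: "(\<lambda>(y, r). F y r) \<in> borel_measurable (lborel \<Otimes>\<^sub>M lborel)"
    unfolding F_def by measurable
  have Fm'[measurable]: "(\<lambda>p. F (fst p) (snd p)) \<in> borel_measurable (lborel \<Otimes>\<^sub>M lborel)"
    unfolding F_def by measurable
  have Fy_int: "integrable lborel (F y)" for y
    unfolding F_def by (intro integrable_mult_right ftc_kk(1))
  have Fy_val: "(\<integral>r. F y r \<partial>lborel) = fb y * (cos (a - s * (y \<bullet> \<omega>)) - cos a)" for y
    unfolding F_def by (simp add: ftc_kk(2))
  have Fy_norm: "(\<integral>r. norm (F y r) \<partial>lborel) \<le> \<bar>s\<bar> * (fb y + (y \<bullet> \<omega>)\<^sup>2 * fb y)" for y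
  proof -
    let ?u = "y \<bullet> \<omega>"
    have "(\<integral>r. norm (F y r) \<partial>lborel) \<le> (\<integral>r. fb y * \<bar>s\<bar> * indicator {-\<bar>?u\<bar>..\<bar>?u\<bar>} r \<partial>lborel)"
    proof (rule integral_mono)
      show "integrable lborel (\<lambda>r. norm (F y r))" using Fy_int[of y] by (rule integrable_norm)
      show "integrable lborel (\<lambda>r. fb y * \<bar>s\<bar> * indicator {-\<bar>?u\<bar>..\<bar>?u\<bar>} r)"
        by (intro integrable_mult_right) auto
      fix r
      show "norm (F y r) \<le> fb y * \<bar>s\<bar> * indicator {-\<bar>?u\<bar>..\<bar>?u\<bar>} r"
        unfolding F_def using fb_nonneg[of y]
        by (auto simp: abs_mult mult.assoc intro!: mult_left_mono mult_mono hp_bound kk_bound[unfolded abs_mult])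
    qed
    also have "\<dots> = fb y * \<bar>s\<bar> * (2 * \<bar>?u\<bar>)"
      by simp
    also have "\<dots> \<le> \<bar>s\<bar> * (fb y + ?u\<^sup>2 * fb y)"
    proof -
      have "2 * \<bar>?u\<bar> \<le> 1 + ?u\<^sup>2"
        using sum_power2_ge_zero[of "\<bar>?u\<bar> - 1" 0] by (simp add: power2_eq_square algebra_simps)
      then have "fb y * (2 * \<bar>?u\<bar>) \<le> fb y * (1 + ?u\<^sup>2)"
        using fb_nonneg[of y] by (simp add: mult_left_mono)
      then have "\<bar>s\<bar> * (fb y * (2 * \<bar>?u\<bar>)) \<le> \<bar>s\<bar> * (fb y * (1 + ?u\<^sup>2))"
        by (rule mult_left_mono) simp
      then show ?thesis
        by (simp add: algebra_simps)
    qed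
    finally show ?thesis .
  qed
  have Fint: "integrable (lborel \<Otimes>\<^sub>M lborel) (\<lambda>(y, r). F y r)"
  proof (rule lborel_pair.Fubini_integrable)
    show "(\<lambda>(y, r). F y r) \<in> borel_measurable (lborel \<Otimes>\<^sub>M lborel)" by (rule Fm)
    show "AE y in lborel. integrable lborel (\<lambda>r. case (y, r) of (y, r) \<Rightarrow> F y r)"
      using Fy_int by simp
    show "integrable lborel (\<lambda>y. \<integral>r. norm (case (y, r) of (y, r) \<Rightarrow> F y r) \<partial>lborel)"
    proof (rule Bochner_Integration.integrable_bound)
      show "integrable lborel (\<lambda>y. \<bar>s\<bar> * (fb y + (y \<bullet> \<omega>)\<^sup>2 * fb y))"
        by (intro integrable_mult_right Bochner_Integration.integrable_add fb_int fb_mom_int)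
      show "(\<lambda>y. \<integral>r. norm (case (y, r) of (y, r) \<Rightarrow> F y r) \<partial>lborel) \<in> borel_measurable lborel"
        by (rule lborel.borel_measurable_lebesgue_integral) measurable
      show "AE y in lborel. norm (\<integral>r. norm (case (y, r) of (y, r) \<Rightarrow> F y r) \<partial>lborel) \<le> norm (\<bar>s\<bar> * (fb y + (y \<bullet> \<omega>)\<^sup>2 * fb y))"
      proof (intro AE_I2)
        fix y
        have "0 \<le> (\<integral>r. norm (F y r) \<partial>lborel)" by simp
        then show "norm (\<integral>r. norm (case (y, r) of (y, r) \<Rightarrow> F y r) \<partial>lborel) \<le> norm (\<bar>s\<bar> * (fb y + (y \<bullet> \<omega>)\<^sup>2 * fb y))"
          using Fy_norm[of y] by simp
      qed
    qed
  qed
  have eqr: "(\<integral>y. F y r \<partial>lborel) = hp s a r * KK \<omega> r" for r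
  proof -
    have "(\<integral>y. F y r \<partial>lborel) = (\<integral>y. hp s a r * (fb y * kk r (y \<bullet> \<omega>)) \<partial>lborel)"
      unfolding F_def by (simp add: ac_simps)
    also have "\<dots> = hp s a r * KK \<omega> r"
      by (simp add: int_kk)
    finally show ?thesis .
  qed
  show "integrable lborel (\<lambda>r. hp s a r * KK \<omega> r)"
    using lborel_pair.integrable_snd[OF Fint] by (simp add: eqr)
  have "(\<integral>y. cos (a - s * (y \<bullet> \<omega>)) * fb y \<partial>lborel) = (\<integral>y. cos a * fb y + (\<integral>r. F y r \<partial>lborel) \<partial>lborel)"
    by (rule Bochner_Integration.integral_cong) (auto simp: Fy_val algebra_simps)
  also have "\<dots> = cos a * (\<integral>y. fb y \<partial>lborel) + (\<integral>y. (\<integral>r. F y r \<partial>lborel) \<partial>lborel)"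
    using lborel_pair.integrable_fst[OF Fint] fb_int by simp
  also have "(\<integral>y. (\<integral>r. F y r \<partial>lborel) \<partial>lborel) = (\<integral>r. (\<integral>y. F y r \<partial>lborel) \<partial>lborel)"
    using lborel_pair.Fubini_integral[OF Fint] by simp
  also have "\<dots> = (\<integral>r. hp s a r * KK \<omega> r \<partial>lborel)"
    by (simp add: eqr)
  finally show "(\<integral>y. cos (a - s * (y \<bullet> \<omega>)) * fb y \<partial>lborel) = cos a + (\<integral>r. hp s a r * KK \<omega> r \<partial>lborel)"
    using fb_one by simp
qed

end

definition mm :: "real \<Rightarrow> real \<Rightarrow> real \<Rightarrow> real" where
  "mm R c r = (if \<bar>r\<bar> < R then c else 1 / r\<^sup>2)"

lemma mm_integral:
  assumes R: "0 < R" and c: "0 \<le> c"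
  shows "has_bochner_integral lborel (mm R c) (2 * (R * c + 1 / R))"
proof -
  have tail_nn: "(\<integral>\<^sup>+ r. ennreal (indicator {R..} r * (1 / r ^ 2)) \<partial>lborel) = ennreal (1 / R)"
  proof -
    have "((\<lambda>x. 1 / x ^ 2) has_integral 1 / (real (2 - 1) * R ^ (2 - 1))) {R..}"
      by (rule has_integral_inverse_power_to_inf) (use R in auto)
    then have hi: "((\<lambda>x. 1 / x ^ 2) has_integral 1 / R) {R..}" by simp
    have "integral\<^sup>N lborel (\<lambda>x. indicator {R..} x * (1 / x ^ 2)) = ennreal (1 / R)"
      by (rule nn_integral_has_integral_lebesgue[OF _ hi]) simp
    moreover have "(\<lambda>x. ennreal (indicator {R..} x * (1 / x ^ 2))) = (\<lambda>x. indicator {R..} x * (1 / x ^ 2))"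
      by auto
    ultimately show ?thesis by simp
  qed
  have tail: "has_bochner_integral lborel (\<lambda>r. indicator {R..} r * (1 / r ^ 2)) (1 / R)"
    by (rule has_bochner_integral_nn_integral[OF _ _ _ tail_nn]) (use R in auto)
  have body: "has_bochner_integral lborel (\<lambda>r. indicator {0..<R} r * c) (R * c)"
    using has_bochner_integral_mult_left[of c lborel "indicator {0..<R}" "measure lborel {0..<R}"]
      has_bochner_integral_real_indicator[of "{0..<R}" lborel] R
    by (simp add: emeasure_lborel_Ico)
  have "has_bochner_integral lborel (\<lambda>r. indicator {0..<R} r * c + indicator {R..} r * (1 / r ^ 2)) (R * c + 1 / R)"
    by (rule has_bochner_integral_add[OF body tail])
  moreover have "(\<lambda>r. indicator {0..<R} r * c + indicator {R..} r * (1 / r ^ 2)) = (\<lambda>r. indicator {0..} r *\<^sub>R mm R c r)"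
    using R by (auto simp: fun_eq_iff indicator_def mm_def power2_eq_square)
  ultimately have hb: "has_bochner_integral lborel (\<lambda>r. indicator {0..} r *\<^sub>R mm R c r) (R * c + 1 / R)" by simp
  have "has_bochner_integral lborel (mm R c) (2 *\<^sub>R (R * c + 1 / R))"
    by (rule has_bochner_integral_even_function[OF hb]) (simp add: mm_def)
  then show ?thesis by simp
qed

lemma mm_nonneg: "0 \<le> c \<Longrightarrow> 0 \<le> mm R c r" by (simp add: mm_def)

context fdens begin

lemma KK_diff:
  assumes w: "norm \<omega> = 1" "norm \<omega>' = 1" and d: "0 < \<delta>"
    and H: "\<And>r. \<bar>Mf f \<omega> r - Mf f \<omega>' r\<bar> \<le> \<delta>"
  shows "\<bar>KK \<omega> r - KK \<omega>' r\<bar> \<le> mm (1 / sqrt \<delta>) \<delta> r"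
proof -
  consider "0 < r" | "r < 0" | "r = 0" by linarith
  then show ?thesis
  proof cases
    case 1
    have e: "KK \<omega> r - KK \<omega>' r = Mf f \<omega>' r - Mf f \<omega> r" using 1 by (simp add: KK_def)
    have a: "0 \<le> 1 - Mf f \<omega> r" "1 - Mf f \<omega> r \<le> 1 / r\<^sup>2" "0 \<le> 1 - Mf f \<omega>' r" "1 - Mf f \<omega>' r \<le> 1 / r\<^sup>2"
      using Mf_le1[of \<omega> r] Mf_le1[of \<omega>' r] Mf_cheb_pos[OF w(1) 1] Mf_cheb_pos[OF w(2) 1] by auto
    have "\<bar>KK \<omega> r - KK \<omega>' r\<bar> \<le> \<delta>" unfolding e using H[of r] by simp
    moreover have "\<bar>KK \<omega> r - KK \<omega>' r\<bar> \<le> 1 / r\<^sup>2" unfolding e using a by linarith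
    ultimately show ?thesis by (simp add: mm_def)
  next
    case 2
    have e: "KK \<omega> r - KK \<omega>' r = Mf f \<omega>' r - Mf f \<omega> r" using 2 by (simp add: KK_def)
    have a: "0 \<le> Mf f \<omega> r" "Mf f \<omega> r \<le> 1 / r\<^sup>2" "0 \<le> Mf f \<omega>' r" "Mf f \<omega>' r \<le> 1 / r\<^sup>2"
      using Mf_nonneg[of \<omega> r] Mf_nonneg[of \<omega>' r] Mf_cheb_neg[OF w(1) 2] Mf_cheb_neg[OF w(2) 2] by auto
    have "\<bar>KK \<omega> r - KK \<omega>' r\<bar> \<le> \<delta>" unfolding e using H[of r] by simp
    moreover have "\<bar>KK \<omega> r - KK \<omega>' r\<bar> \<le> 1 / r\<^sup>2" unfolding e using a by linarith
    ultimately show ?thesis by (simp add: mm_def)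
  next
    case 3
    then show ?thesis using d by (simp add: KK_def mm_def)
  qed
qed

lemma phi_diff:
  assumes w: "norm \<omega> = 1" "norm \<omega>' = 1" and d: "0 < \<delta>"
    and H: "\<And>r. \<bar>Mf f \<omega> r - Mf f \<omega>' r\<bar> \<le> \<delta>"
  shows "\<bar>(\<integral>y. cos (a - s * (y \<bullet> \<omega>)) * fb y \<partial>lborel) - (\<integral>y. cos (a - s * (y \<bullet> \<omega>')) * fb y \<partial>lborel)\<bar>
          \<le> \<bar>s\<bar> * (4 * sqrt \<delta>)"
proof -
  define R where "R = 1 / sqrt \<delta>"
  have R: "0 < R" using d by (simp add: R_def)
  have mi: "has_bochner_integral lborel (mm R \<delta>) (2 * (R * \<delta> + 1 / R))"
    by (rule mm_integral[OF R]) (use d in auto)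
  have val: "2 * (R * \<delta> + 1 / R) = 4 * sqrt \<delta>"
    using d unfolding R_def by (simp add: field_simps)
  have "(\<integral>y. cos (a - s * (y \<bullet> \<omega>)) * fb y \<partial>lborel) - (\<integral>y. cos (a - s * (y \<bullet> \<omega>')) * fb y \<partial>lborel)
      = (\<integral>r. hp s a r * KK \<omega> r \<partial>lborel) - (\<integral>r. hp s a r * KK \<omega>' r \<partial>lborel)"
    unfolding layer(2) by simp
  also have "\<dots> = (\<integral>r. hp s a r * (KK \<omega> r - KK \<omega>' r) \<partial>lborel)"
    using Bochner_Integration.integral_diff[OF layer(1)[of s a \<omega>] layer(1)[of s a \<omega>']]
    by (simp add: algebra_simps)
  finally have eq: "(\<integral>y. cos (a - s * (y \<bullet> \<omega>)) * fb y \<partial>lborel) - (\<integral>y. cos (a - s * (y \<bullet> \<omega>')) * fb y \<partial>lborel)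
      = (\<integral>r. hp s a r * (KK \<omega> r - KK \<omega>' r) \<partial>lborel)" .
  have I: "integrable lborel (\<lambda>r. hp s a r * (KK \<omega> r - KK \<omega>' r))"
    using Bochner_Integration.integrable_diff[OF layer(1)[of s a \<omega>] layer(1)[of s a \<omega>']]
    by (simp add: algebra_simps)
  have "\<bar>\<integral>r. hp s a r * (KK \<omega> r - KK \<omega>' r) \<partial>lborel\<bar> \<le> (\<integral>r. \<bar>hp s a r * (KK \<omega> r - KK \<omega>' r)\<bar> \<partial>lborel)"
    by (rule integral_abs_bound)
  also have "\<dots> \<le> (\<integral>r. \<bar>s\<bar> * mm R \<delta> r \<partial>lborel)"
  proof (rule integral_mono)
    show "integrable lborel (\<lambda>r. \<bar>hp s a r * (KK \<omega> r - KK \<omega>' r)\<bar>)" using I by (rule integrable_abs)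
    show "integrable lborel (\<lambda>r. \<bar>s\<bar> * mm R \<delta> r)"
      using mi by (intro integrable_mult_right) (simp add: has_bochner_integral_iff)
    fix r
    show "\<bar>hp s a r * (KK \<omega> r - KK \<omega>' r)\<bar> \<le> \<bar>s\<bar> * mm R \<delta> r"
      unfolding abs_mult R_def
      by (rule mult_mono[OF hp_bound KK_diff[OF w d H]]) auto
  qed
  also have "\<dots> = \<bar>s\<bar> * (4 * sqrt \<delta>)"
    using mi val by (simp add: has_bochner_integral_iff)
  finally show ?thesis unfolding eq .
qed

end

lemma reflection_exists:
  fixes \<theta> \<theta>' :: "'a::euclidean_space"
  assumes n: "norm \<theta> = 1" "norm \<theta>' = 1"
  obtains R :: "'a \<Rightarrow> 'a" where "\<And>x. R (R x) = x" "\<And>x. norm (R x) = norm x"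
    "\<And>x y. R x \<bullet> y = x \<bullet> R y" "R \<theta> = \<theta>'" "\<And>a b. R (a - b) = R a - R b" "\<And>c x. R (c *\<^sub>R x) = c *\<^sub>R R x"
    "R \<in> borel_measurable borel"
proof (cases "\<theta> = \<theta>'")
  case True
  show ?thesis by (rule that[of "\<lambda>x. x"]) (use True in auto)
next
  case False
  define d where "d = norm (\<theta> - \<theta>')"
  have d: "0 < d" using False by (simp add: d_def)
  define u where "u = (1 / d) *\<^sub>R (\<theta> - \<theta>')"
  have "norm u = 1" using d unfolding u_def d_def by (simp add: scaleR_diff_right[symmetric])
  then have u1: "u \<bullet> u = 1" by (simp add: power2_norm_eq_inner[symmetric])
  define R where "R = (\<lambda>x. x - (2 * (x \<bullet> u)) *\<^sub>R u)"
  show ?thesis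
  proof (rule that[of R])
    fix x
    show "R (R x) = x" unfolding R_def using u1 by (simp add: inner_diff_left algebra_simps)
    have "(norm (R x))\<^sup>2 = (norm x)\<^sup>2"
      unfolding R_def power2_norm_eq_inner using u1
      by (simp add: inner_diff_left inner_diff_right algebra_simps) (metis inner_commute)
    then show "norm (R x) = norm x" by (simp add: power2_eq_iff_nonneg)
  next
    fix x y show "R x \<bullet> y = x \<bullet> R y" unfolding R_def by (simp add: inner_diff_left inner_diff_right algebra_simps) (metis inner_commute)
  next
    fix a b show "R (a - b) = R a - R b" unfolding R_def by (simp add: inner_diff_left algebra_simps)
  next
    fix c x show "R (c *\<^sub>R x) = c *\<^sub>R R x" unfolding R_def by (simp add: algebra_simps)
  next
    show "R \<in> borel_measurable borel" unfolding R_def by measurable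
  next
    have tt: "\<theta> \<bullet> \<theta> = 1" "\<theta>' \<bullet> \<theta>' = 1" using n by (simp_all add: power2_norm_eq_inner[symmetric])
    have d2: "d\<^sup>2 = 2 - 2 * (\<theta> \<bullet> \<theta>')"
      unfolding d_def power2_norm_eq_inner using tt by (simp add: inner_diff_left inner_diff_right inner_commute)
    have "2 * (\<theta> \<bullet> u) = d"
    proof -
      have "2 * (\<theta> \<bullet> u) = 2 * (1 - \<theta> \<bullet> \<theta>') / d" unfolding u_def using tt by (simp add: inner_diff_right)
      also have "\<dots> = d\<^sup>2 / d" using d2 by simp
      also have "\<dots> = d" using d by (simp add: power2_eq_square)
      finally show ?thesis .
    qed
    then show "R \<theta> = \<theta>'" unfolding R_def u_def using d by simp
  qed
qed

context fdens begin

definition Psi :: "'a \<Rightarrow> real \<Rightarrow> real" where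
  "Psi v a = (\<integral>y. cos (a - v \<bullet> y) * fb y \<partial>lborel)"

lemma gauss_meas[measurable]: "gauss v \<in> borel_measurable borel"
  unfolding gauss_def by measurable

lemma fub:
  fixes P :: "'a \<Rightarrow> 'a" and x :: 'a
  assumes Pm[measurable]: "P \<in> borel_measurable borel"
  shows "integrable lborel (\<lambda>z. gauss 1 z * Psi (P z) (z \<bullet> x))"
    and "(\<integral>y. fb y * (\<integral>z. cos (z \<bullet> x - P z \<bullet> y) * gauss 1 z \<partial>lborel) \<partial>lborel)
         = (\<integral>z. gauss 1 z * Psi (P z) (z \<bullet> x) \<partial>lborel)"
proof -
  have Pm'[measurable]: "P \<in> borel_measurable lborel" using Pm by (simp add: measurable_lborel2)
  have gm'[measurable]: "gauss 1 \<in> borel_measurable (lborel :: 'a measure)" by (simp add: measurable_lborel2)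
  define F where "F = (\<lambda>y z. fb y * (cos (z \<bullet> x - P z \<bullet> y) * gauss 1 z))"
  have Fm[measurable]: "(\<lambda>(y, z). F y z) \<in> borel_measurable (lborel \<Otimes>\<^sub>M lborel)"
    unfolding F_def by measurable
  have Fy_int: "integrable lborel (F y)" for y
  proof -
    have "integrable lborel (\<lambda>z. cos (z \<bullet> x - P z \<bullet> y) * gauss 1 z)"
    proof (rule Bochner_Integration.integrable_bound[OF gauss_integrable])
      show "(\<lambda>z. cos (z \<bullet> x - P z \<bullet> y) * gauss 1 z) \<in> borel_measurable lborel" by measurable
      show "AE z in lborel. norm (cos (z \<bullet> x - P z \<bullet> y) * gauss 1 z) \<le> norm (gauss 1 z)"
        by (intro AE_I2) (auto simp: abs_mult gauss_nonneg intro!: mult_left_le_one_le)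
    qed
    then show ?thesis unfolding F_def by (rule integrable_mult_right)
  qed
  have Fy_norm: "(\<integral>z. norm (F y z) \<partial>lborel) \<le> fb y" for y
  proof -
    have "(\<integral>z. norm (F y z) \<partial>lborel) \<le> (\<integral>z. fb y * gauss 1 (z::'a) \<partial>lborel)"
    proof (rule Bochner_Integration.integral_mono)
      show "integrable lborel (\<lambda>z. norm (F y z))" using Fy_int[of y] by (rule integrable_norm)
      show "integrable lborel (\<lambda>z. fb y * gauss 1 (z::'a))" by (intro integrable_mult_right gauss_integrable)
      fix z show "norm (F y z) \<le> fb y * gauss 1 z"
        unfolding F_def using fb_nonneg[of y] gauss_nonneg[of 1 z]
        by (auto simp: abs_mult intro!: mult_left_mono mult_left_le_one_le)
    qed
    also have "\<dots> = fb y" by (simp add: gauss_integral)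
    finally show ?thesis .
  qed
  have Fint: "integrable (lborel \<Otimes>\<^sub>M lborel) (\<lambda>(y, z). F y z)"
  proof (rule lborel_pair.Fubini_integrable)
    show "(\<lambda>(y, z). F y z) \<in> borel_measurable (lborel \<Otimes>\<^sub>M lborel)" by (rule Fm)
    show "AE y in lborel. integrable lborel (\<lambda>z. case (y, z) of (y, z) \<Rightarrow> F y z)"
      using Fy_int by simp
    show "integrable lborel (\<lambda>y. \<integral>z. norm (case (y, z) of (y, z) \<Rightarrow> F y z) \<partial>lborel)"
    proof (rule Bochner_Integration.integrable_bound[OF fb_int])
      show "(\<lambda>y. \<integral>z. norm (case (y, z) of (y, z) \<Rightarrow> F y z) \<partial>lborel) \<in> borel_measurable lborel"
        by (rule lborel.borel_measurable_lebesgue_integral) measurable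
      show "AE y in lborel. norm (\<integral>z. norm (case (y, z) of (y, z) \<Rightarrow> F y z) \<partial>lborel) \<le> norm (fb y)"
      proof (intro AE_I2)
        fix y
        have "0 \<le> (\<integral>z. norm (F y z) \<partial>lborel)" by simp
        then show "norm (\<integral>z. norm (case (y, z) of (y, z) \<Rightarrow> F y z) \<partial>lborel) \<le> norm (fb y)"
          using Fy_norm[of y] fb_nonneg[of y] by simp
      qed
    qed
  qed
  have eqz: "(\<integral>y. F y z \<partial>lborel) = gauss 1 z * Psi (P z) (z \<bullet> x)" for z
  proof -
    have "(\<integral>y. F y z \<partial>lborel) = (\<integral>y. gauss 1 z * (cos (z \<bullet> x - P z \<bullet> y) * fb y) \<partial>lborel)"
      unfolding F_def by (simp add: ac_simps)
    also have "\<dots> = gauss 1 z * Psi (P z) (z \<bullet> x)"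
      by (simp add: Psi_def)
    finally show ?thesis .
  qed
  show "integrable lborel (\<lambda>z. gauss 1 z * Psi (P z) (z \<bullet> x))"
    using lborel_pair.integrable_snd[OF Fint] by (simp add: eqz)
  have "(\<integral>y. fb y * (\<integral>z. cos (z \<bullet> x - P z \<bullet> y) * gauss 1 z \<partial>lborel) \<partial>lborel)
      = (\<integral>y. (\<integral>z. F y z \<partial>lborel) \<partial>lborel)"
    unfolding F_def by simp
  also have "\<dots> = (\<integral>z. (\<integral>y. F y z \<partial>lborel) \<partial>lborel)"
    using lborel_pair.Fubini_integral[OF Fint] by simp
  also have "\<dots> = (\<integral>z. gauss 1 z * Psi (P z) (z \<bullet> x) \<partial>lborel)"
    by (simp add: eqz)
  finally show "(\<integral>y. fb y * (\<integral>z. cos (z \<bullet> x - P z \<bullet> y) * gauss 1 z \<partial>lborel) \<partial>lborel)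
         = (\<integral>z. gauss 1 z * Psi (P z) (z \<bullet> x) \<partial>lborel)" .
qed

end

context fdens begin

lemma conv_eq: "conv f (gauss 1) x = (\<integral>y. fb y * gauss 1 (x - y) \<partial>lborel)"
proof -
  have "conv f (gauss 1) x = (\<integral>y. gauss 1 (x - y) * f y \<partial>lebesgue)"
    unfolding conv_def by (simp add: mult.commute)
  also have "\<dots> = (\<integral>y. gauss 1 (x - y) * fb y \<partial>lborel)"
    by (rule transfer(2)) measurable
  finally show ?thesis by (simp add: mult.commute)
qed

lemma gauss_id: "gauss 1 (w::'a) = (2 * pi * 1) powr (- real DIM('a) / 2) * (\<integral>z. cos (z \<bullet> w) * gauss 1 z \<partial>lborel)"
  unfolding gauss_cos(2) by (simp add: gauss_def)

lemma Psi_diff: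
  assumes d: "0 < \<delta>"
    and H: "\<And>\<omega> \<omega>' r. norm \<omega> = 1 \<Longrightarrow> norm \<omega>' = 1 \<Longrightarrow> \<bar>Mf f \<omega> r - Mf f \<omega>' r\<bar> \<le> \<delta>"
    and nz: "norm v = norm (z::'a)"
  shows "\<bar>Psi v a - Psi z a\<bar> \<le> norm z * (4 * sqrt \<delta>)"
proof (cases "z = 0")
  case True
  then have "v = 0" using nz by simp
  then show ?thesis using True by simp
next
  case False
  define s where "s = norm z"
  have s: "0 < s" using False by (simp add: s_def)
  define \<omega> where "\<omega> = (1 / s) *\<^sub>R v"
  define \<omega>' where "\<omega>' = (1 / s) *\<^sub>R z"
  have w: "norm \<omega> = 1" "norm \<omega>' = 1" using s nz unfolding \<omega>_def \<omega>'_def s_def by simp_all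
  have v: "v = s *\<^sub>R \<omega>" and z: "z = s *\<^sub>R \<omega>'" using s unfolding \<omega>_def \<omega>'_def by simp_all
  have "Psi v a = (\<integral>y. cos (a - s * (y \<bullet> \<omega>)) * fb y \<partial>lborel)"
    unfolding Psi_def v by (simp add: inner_commute)
  moreover have "Psi z a = (\<integral>y. cos (a - s * (y \<bullet> \<omega>')) * fb y \<partial>lborel)"
    unfolding Psi_def z by (simp add: inner_commute)
  ultimately have "\<bar>Psi v a - Psi z a\<bar> \<le> \<bar>s\<bar> * (4 * sqrt \<delta>)"
    using phi_diff[OF w d H[OF w]] by simp
  then show ?thesis using s by (simp add: s_def)
qed

lemma conv_diff:
  assumes th: "norm \<theta> = 1" "norm \<theta>' = 1" and d: "0 < \<delta>"
    and H: "\<And>\<omega> \<omega>' r. norm \<omega> = 1 \<Longrightarrow> norm \<omega>' = 1 \<Longrightarrow> \<bar>Mf f \<omega> r - Mf f \<omega>' r\<bar> \<le> \<delta>"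
  shows "\<bar>conv f (gauss 1) (t *\<^sub>R \<theta>') - conv f (gauss 1) (t *\<^sub>R \<theta>)\<bar>
          \<le> (2 * pi * 1) powr (- real DIM('a) / 2) * (4 * sqrt \<delta> * real DIM('a))"
proof -
  obtain R :: "'a \<Rightarrow> 'a" where R: "\<And>x. R (R x) = x" "\<And>x. norm (R x) = norm x"
    "\<And>x y. R x \<bullet> y = x \<bullet> R y" "R \<theta> = \<theta>'" "\<And>a b. R (a - b) = R a - R b" "\<And>c x. R (c *\<^sub>R x) = c *\<^sub>R R x"
    and Rm: "R \<in> borel_measurable borel"
    using reflection_exists[OF th] by blast
  define c where "c = (2 * pi * 1) powr (- real DIM('a) / 2)"
  have c0: "0 \<le> c" unfolding c_def by simp
  define x where "x = t *\<^sub>R \<theta>"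
  have x': "t *\<^sub>R \<theta>' = R x" unfolding x_def using R(4,6) by simp
  have e1: "conv f (gauss 1) (t *\<^sub>R \<theta>) = c * (\<integral>z. gauss 1 z * Psi z (z \<bullet> x) \<partial>lborel)"
  proof -
    have "conv f (gauss 1) (t *\<^sub>R \<theta>) = (\<integral>y. fb y * (c * (\<integral>z. cos (z \<bullet> x - z \<bullet> y) * gauss 1 z \<partial>lborel)) \<partial>lborel)"
      unfolding conv_eq x_def[symmetric] c_def
      by (subst gauss_id) (simp add: inner_diff_right)
    also have "\<dots> = c * (\<integral>y. fb y * (\<integral>z. cos (z \<bullet> x - z \<bullet> y) * gauss 1 z \<partial>lborel) \<partial>lborel)"
      by (simp add: ac_simps)
    also have "\<dots> = c * (\<integral>z. gauss 1 z * Psi z (z \<bullet> x) \<partial>lborel)"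
      using fub(2)[of "\<lambda>z. z" x] by simp
    finally show ?thesis .
  qed
  have e2: "conv f (gauss 1) (t *\<^sub>R \<theta>') = c * (\<integral>z. gauss 1 z * Psi (R z) (z \<bullet> x) \<partial>lborel)"
  proof -
    have g: "gauss 1 (R x - y) = gauss 1 (x - R y)" for y
    proof -
      have "R x - y = R (x - R y)" using R(1,5) by simp
      then show ?thesis using gauss_norm R(2) by metis
    qed
    have "conv f (gauss 1) (t *\<^sub>R \<theta>') = (\<integral>y. fb y * (c * (\<integral>z. cos (z \<bullet> x - R z \<bullet> y) * gauss 1 z \<partial>lborel)) \<partial>lborel)"
      unfolding conv_eq x' g c_def
      by (subst gauss_id) (simp add: inner_diff_right R(3))
    also have "\<dots> = c * (\<integral>y. fb y * (\<integral>z. cos (z \<bullet> x - R z \<bullet> y) * gauss 1 z \<partial>lborel) \<partial>lborel)"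
      by (simp add: ac_simps)
    also have "\<dots> = c * (\<integral>z. gauss 1 z * Psi (R z) (z \<bullet> x) \<partial>lborel)"
      using fub(2)[OF Rm, of x] by simp
    finally show ?thesis .
  qed
  have I1: "integrable lborel (\<lambda>z. gauss 1 z * Psi z (z \<bullet> x))" using fub(1)[of "\<lambda>z. z" x] by simp
  have I2: "integrable lborel (\<lambda>z. gauss 1 z * Psi (R z) (z \<bullet> x))" using fub(1)[OF Rm, of x] .
  have "conv f (gauss 1) (t *\<^sub>R \<theta>') - conv f (gauss 1) (t *\<^sub>R \<theta>)
      = c * (\<integral>z. gauss 1 z * (Psi (R z) (z \<bullet> x) - Psi z (z \<bullet> x)) \<partial>lborel)"
  proof -
    have "(\<integral>z. gauss 1 z * (Psi (R z) (z \<bullet> x) - Psi z (z \<bullet> x)) \<partial>lborel)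
        = (\<integral>z. gauss 1 z * Psi (R z) (z \<bullet> x) \<partial>lborel) - (\<integral>z. gauss 1 z * Psi z (z \<bullet> x) \<partial>lborel)"
      using Bochner_Integration.integral_diff[OF I2 I1] by (simp add: right_diff_distrib)
    then show ?thesis unfolding e1 e2 by (simp add: right_diff_distrib)
  qed
  then have "\<bar>conv f (gauss 1) (t *\<^sub>R \<theta>') - conv f (gauss 1) (t *\<^sub>R \<theta>)\<bar>
      = c * \<bar>\<integral>z. gauss 1 z * (Psi (R z) (z \<bullet> x) - Psi z (z \<bullet> x)) \<partial>lborel\<bar>"
    using c0 by (simp add: abs_mult)
  also have "\<dots> \<le> c * (\<integral>z. (4 * sqrt \<delta>) * (norm z * gauss 1 (z::'a)) \<partial>lborel)"
  proof (rule mult_left_mono[OF _ c0])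
    have Id: "integrable lborel (\<lambda>z. gauss 1 z * (Psi (R z) (z \<bullet> x) - Psi z (z \<bullet> x)))"
      using Bochner_Integration.integrable_diff[OF I2 I1] by (simp add: algebra_simps)
    have "\<bar>\<integral>z. gauss 1 z * (Psi (R z) (z \<bullet> x) - Psi z (z \<bullet> x)) \<partial>lborel\<bar>
        \<le> (\<integral>z. \<bar>gauss 1 z * (Psi (R z) (z \<bullet> x) - Psi z (z \<bullet> x))\<bar> \<partial>lborel)"
      by (rule integral_abs_bound)
    also have "\<dots> \<le> (\<integral>z. (4 * sqrt \<delta>) * (norm z * gauss 1 (z::'a)) \<partial>lborel)"
    proof (rule Bochner_Integration.integral_mono)
      show "integrable lborel (\<lambda>z. \<bar>gauss 1 z * (Psi (R z) (z \<bullet> x) - Psi z (z \<bullet> x))\<bar>)"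
        using Id by (rule integrable_abs)
      show "integrable lborel (\<lambda>z::'a. (4 * sqrt \<delta>) * (norm z * gauss 1 z))"
        by (intro integrable_mult_right gauss_norm_moment(1))
      fix z :: 'a
      have "\<bar>Psi (R z) (z \<bullet> x) - Psi z (z \<bullet> x)\<bar> \<le> norm z * (4 * sqrt \<delta>)"
        by (rule Psi_diff[OF d H R(2)]) 
      then have "gauss 1 z * \<bar>Psi (R z) (z \<bullet> x) - Psi z (z \<bullet> x)\<bar> \<le> gauss 1 z * (norm z * (4 * sqrt \<delta>))"
        using gauss_nonneg[of 1 z] by (rule mult_left_mono)
      then show "\<bar>gauss 1 z * (Psi (R z) (z \<bullet> x) - Psi z (z \<bullet> x))\<bar> \<le> (4 * sqrt \<delta>) * (norm z * gauss 1 z)"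
        using gauss_nonneg[of 1 z] by (simp add: abs_mult ac_simps)
    qed
    finally show "\<bar>\<integral>z. gauss 1 z * (Psi (R z) (z \<bullet> x) - Psi z (z \<bullet> x)) \<partial>lborel\<bar>
        \<le> (\<integral>z. (4 * sqrt \<delta>) * (norm z * gauss 1 (z::'a)) \<partial>lborel)" .
  qed
  also have "\<dots> \<le> c * (4 * sqrt \<delta> * real DIM('a))"
  proof (rule mult_left_mono[OF _ c0])
    have "(\<integral>z. (4 * sqrt \<delta>) * (norm z * gauss 1 z) \<partial>(lborel::'a measure)) = 4 * sqrt \<delta> * (\<integral>z. norm z * gauss 1 z \<partial>(lborel::'a measure))"
      by simp
    also have "\<dots> \<le> 4 * sqrt \<delta> * real DIM('a)"
      by (rule mult_left_mono[OF gauss_norm_moment(2)]) (use d in simp)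
    finally show "(\<integral>z. (4 * sqrt \<delta>) * (norm z * gauss 1 z) \<partial>(lborel::'a measure)) \<le> 4 * sqrt \<delta> * real DIM('a)" .
  qed
  finally show ?thesis unfolding c_def .
qed

end

lemma final_arith:
  fixes \<alpha> :: real and n :: nat
  assumes a: "\<alpha> \<ge> 5" and n: "n \<ge> 1"
  shows "(2 * pi * 1) powr (- real n / 2) * (4 * sqrt (exp (- 5 * \<alpha> * real n)) * real n) \<le> exp (- \<alpha> * real n)"
proof -
  have c1: "(2 * pi * 1) powr (- real n / 2) \<le> 1"
  proof -
    have "1 \<le> (2 * pi) powr (real n / 2)"
      by (rule ge_one_powr_ge_zero) (use pi_gt3 in auto)
    then have "inverse ((2 * pi) powr (real n / 2)) \<le> 1" by (simp add: inverse_le_1_iff)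
    then show ?thesis by (simp add: powr_minus[symmetric])
  qed
  have sq: "sqrt (exp (- 5 * \<alpha> * real n)) = exp (- 5 * \<alpha> * real n / 2)"
  proof (rule real_sqrt_unique)
    show "(exp (- 5 * \<alpha> * real n / 2))\<^sup>2 = exp (- 5 * \<alpha> * real n)"
      by (simp add: power2_eq_square exp_add[symmetric])
  qed simp
  have "4 * real n \<le> 1 + 3 * \<alpha> * real n / 2"
  proof -
    have "15 * real n \<le> 3 * \<alpha> * real n" using a by (intro mult_right_mono) auto
    then show ?thesis by simp
  qed
  also have "\<dots> \<le> exp (3 * \<alpha> * real n / 2)" by (rule exp_ge_add_one_self[unfolded add.commute[of _ 1]])
  finally have k: "4 * real n \<le> exp (3 * \<alpha> * real n / 2)" .
  have "4 * sqrt (exp (- 5 * \<alpha> * real n)) * real n = (4 * real n) * exp (- 5 * \<alpha> * real n / 2)"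
    unfolding sq by simp
  also have "\<dots> \<le> exp (3 * \<alpha> * real n / 2) * exp (- 5 * \<alpha> * real n / 2)"
    by (rule mult_right_mono[OF k]) simp
  also have "\<dots> = exp (- \<alpha> * real n)" by (simp add: exp_add[symmetric])
  finally have B: "4 * sqrt (exp (- 5 * \<alpha> * real n)) * real n \<le> exp (- \<alpha> * real n)" .
  have "(2 * pi * 1) powr (- real n / 2) * (4 * sqrt (exp (- 5 * \<alpha> * real n)) * real n)
      \<le> 1 * (4 * sqrt (exp (- 5 * \<alpha> * real n)) * real n)"
    by (rule mult_right_mono[OF c1]) simp
  then have "(2 * pi * 1) powr (- real n / 2) * (4 * sqrt (exp (- 5 * \<alpha> * real n)) * real n)
      \<le> 4 * sqrt (exp (- 5 * \<alpha> * real n)) * real n" by (simp only: mult_1_left)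
  then show ?thesis using B by (rule order_trans)
qed

theorem lemma4p2:
  fixes f :: "'a::euclidean_space \<Rightarrow> real" and \<alpha> :: real
  assumes "\<alpha> \<ge> 5"
    and "\<And>x. f x \<ge> 0"
    and "isotropic f"
    and "log_concave f"
    and "\<And>t. (SUP \<theta>\<in>sphere 0 1. Mf f \<theta> t)
               \<le> exp (- 5 * \<alpha> * real DIM('a)) + (INF \<theta>\<in>sphere 0 1. Mf f \<theta> t)"
  shows "\<forall>t\<ge>0. (SUP \<theta>\<in>sphere 0 1. conv f (gauss 1) (t *\<^sub>R \<theta>))
               \<le> exp (- \<alpha> * real DIM('a)) + (INF \<theta>\<in>sphere 0 1. conv f (gauss 1) (t *\<^sub>R \<theta>))"
proof -
  note iso = assms(3)[unfolded isotropic_def]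
  have fint: "integrable lebesgue f" using iso by blast
  then have fm: "f \<in> borel_measurable lebesgue" by auto
  obtain g where gm: "g \<in> borel_measurable lborel" and gae: "AE x in lborel. f x = g x"
    using completion_ex_borel_measurable_real[OF fm] by blast
  define fb where "fb = (\<lambda>x. max 0 (g x))"
  have fbm: "fb \<in> borel_measurable borel" unfolding fb_def using gm by (simp add: measurable_lborel2)
  have fbae: "AE x in lebesgue. f x = fb x"
    using AE_completion[OF gae]
  proof eventually_elim
    case (elim x)
    then show ?case using assms(2)[of x] by (simp add: fb_def)
  qed
  interpret fdens f fb
  proof
    show "fb \<in> borel_measurable borel" by (rule fbm)
    show "0 \<le> fb x" for x by (simp add: fb_def)
    show "AE x in lebesgue. f x = fb x" by (rule fbae)
    show "integrable lebesgue f" by (rule fint)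
    show "(\<integral>x. f x \<partial>lebesgue) = 1" using iso by blast
    show "integrable lebesgue (\<lambda>x. (x \<bullet> \<theta>)\<^sup>2 * f x) \<and> (\<integral>x. (x \<bullet> \<theta>)\<^sup>2 * f x \<partial>lebesgue) = (norm \<theta>)\<^sup>2" for \<theta>
      using iso by blast
  qed
  define \<delta> where "\<delta> = exp (- 5 * \<alpha> * real DIM('a))"
  have d: "0 < \<delta>" by (simp add: \<delta>_def)
  have bddA: "bdd_above ((\<lambda>\<theta>. Mf f \<theta> r) ` S)" for r S
    by (rule bdd_aboveI[of _ 1]) (auto simp: Mf_le1)
  have bddB: "bdd_below ((\<lambda>\<theta>. Mf f \<theta> r) ` S)" for r S
    by (rule bdd_belowI[of _ 0]) (auto simp: Mf_nonneg)
  have H1: "Mf f \<omega> r \<le> \<delta> + Mf f \<omega>' r" if "norm \<omega> = 1" "norm \<omega>' = 1" for \<omega> \<omega>' r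
  proof -
    have "Mf f \<omega> r \<le> (SUP \<theta>\<in>sphere 0 1. Mf f \<theta> r)"
      by (rule cSUP_upper[OF _ bddA]) (use that in simp)
    also have "\<dots> \<le> \<delta> + (INF \<theta>\<in>sphere 0 1. Mf f \<theta> r)" unfolding \<delta>_def by (rule assms(5))
    also have "(INF \<theta>\<in>sphere 0 1. Mf f \<theta> r) \<le> Mf f \<omega>' r"
      by (rule cINF_lower[OF bddB]) (use that in simp)
    finally show ?thesis by simp
  qed
  have H: "\<bar>Mf f \<omega> r - Mf f \<omega>' r\<bar> \<le> \<delta>" if "norm \<omega> = 1" "norm \<omega>' = 1" for \<omega> \<omega>' r
    using H1[OF that, of r] H1[OF that(2,1), of r] by linarith
  have B: "(2 * pi * 1) powr (- real DIM('a) / 2) * (4 * sqrt \<delta> * real DIM('a)) \<le> exp (- \<alpha> * real DIM('a))"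
    unfolding \<delta>_def by (rule final_arith[OF assms(1)]) (simp add: DIM_positive Suc_le_eq)
  have pair: "conv f (gauss 1) (t *\<^sub>R \<theta>) \<le> exp (- \<alpha> * real DIM('a)) + conv f (gauss 1) (t *\<^sub>R \<theta>')"
    if "norm \<theta> = 1" "norm \<theta>' = 1" for \<theta> \<theta>' :: 'a and t
    using conv_diff[OF that(2,1) d H, of t] B by linarith
  have ne: "sphere (0::'a) 1 \<noteq> {}"
  proof -
    obtain b :: 'a where "b \<in> Basis" using nonempty_Basis by blast
    then have "b \<in> sphere 0 1" by simp
    then show ?thesis by blast
  qed
  show ?thesis
  proof (intro allI impI)
    fix t :: real
    show "(SUP \<theta>\<in>sphere 0 1. conv f (gauss 1) (t *\<^sub>R \<theta>))
               \<le> exp (- \<alpha> * real DIM('a)) + (INF \<theta>\<in>sphere 0 1. conv f (gauss 1) (t *\<^sub>R \<theta>))"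
    proof (rule cSUP_least[OF ne])
      fix \<theta> :: 'a assume th: "\<theta> \<in> sphere 0 1"
      have "conv f (gauss 1) (t *\<^sub>R \<theta>) - exp (- \<alpha> * real DIM('a)) \<le> (INF \<theta>\<in>sphere 0 1. conv f (gauss 1) (t *\<^sub>R \<theta>))"
      proof (rule cINF_greatest[OF ne])
        fix \<theta>' :: 'a assume "\<theta>' \<in> sphere 0 1"
        then show "conv f (gauss 1) (t *\<^sub>R \<theta>) - exp (- \<alpha> * real DIM('a)) \<le> conv f (gauss 1) (t *\<^sub>R \<theta>')"
          using pair[of \<theta> \<theta>' t] th by simp
      qed
      then show "conv f (gauss 1) (t *\<^sub>R \<theta>) \<le> exp (- \<alpha> * real DIM('a)) + (INF \<theta>\<in>sphere 0 1. conv f (gauss 1) (t *\<^sub>R \<theta>))"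
        by simp
    qed
  qed
qed

end
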